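(* For $n\geq 1$, $$P^{(\mathsf{nest}, \mathsf{cros}, \mathsf{exc}, \mathsf{fix})}(\mathfrak{S}_n; p, q, tq, r)=\left(\frac{1+xt}{1+x}\right)^{n}P^{(\mathsf{nest}, \mathsf{cros},\mathsf{cpk}, \mathsf{exc}, \mathsf{fix})}\left(\mathfrak{S}_n; p, q, \frac{(1+x)^{2}t}{(x+t)(1+xt)},\frac{q(x+t)}{1+xt}, \frac{(1+x)r}{1+xt}\right),$$ equivalently, $$P^{(\mathsf{nest}, \mathsf{cros}, \mathsf{cpk}, \mathsf{exc}, \mathsf{fix})}(\mathfrak{S}_n; p, q, x, qt, r)=\left(\frac{1+u}{1+uv}\right)^{n}P^{(\mathsf{nest}, \mathsf{cros}, \mathsf{exc}, \mathsf{fix})}\left(\mathfrak{S}_n; p, q, qv, \frac{(1+uv)r}{1+u}\right),$$ where $u=\frac{1+t^{2}-2xt-(1-t)\sqrt{(1+t)^{2}-4xt}}{2(1-x)t}$ and $v=\frac{(1+t)^{2}-2xt-(1+t)\sqrt{(1+t)^{2}-4xt}}{2xt}$.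
   Context: $\mathfrak{S}_n$ is the set of permutations of $[n]$. $P^{(\mathsf{stat}_1,\ldots,\mathsf{stat}_m)}(\Omega;t_1,\ldots,t_m)=\sum_{\sigma\in\Omega}\prod_j t_j^{\mathsf{stat}_j\sigma}$. For $\sigma\in\mathfrak{S}_n$: $\mathsf{exc}\,\sigma=\#\{i:\sigma(i)>i\}$, $\mathsf{fix}\,\sigma=\#\{i:\sigma(i)=i\}$, $\mathsf{cpk}\,\sigma=\#\{x\in[n]:\sigma^{-1}(x)<x>\sigma(x)\}$; $\mathsf{nest}_i\sigma=\#\{j: j<i<\sigma(i)<\sigma(j)\text{ or }\sigma(j)<\sigma(i)\le i<j\}$, $\mathsf{cros}_i\sigma=\#\{j: j<i<\sigma(j)<\sigma(i)\text{ or }\sigma(i)<\sigma(j)\le i<j\}$, $\mathsf{nest}=\sum_{i=1}^n\mathsf{nest}_i$, $\mathsf{cros}=\sum_{i=1}^n\mathsf{cros}_i$. *)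

theory Defs
  imports "HOL-Combinatorics.Permutations" Complex_Main
begin

definition Sym :: "nat \<Rightarrow> (nat \<Rightarrow> nat) set" where
  "Sym n = {\<sigma>. \<sigma> permutes {1..n}}"

definition exc :: "nat \<Rightarrow> (nat \<Rightarrow> nat) \<Rightarrow> nat" where
  "exc n \<sigma> = card {i \<in> {1..n}. \<sigma> i > i}"

definition fixp :: "nat \<Rightarrow> (nat \<Rightarrow> nat) \<Rightarrow> nat" where
  "fixp n \<sigma> = card {i \<in> {1..n}. \<sigma> i = i}"

definition cpk :: "nat \<Rightarrow> (nat \<Rightarrow> nat) \<Rightarrow> nat" where
  "cpk n \<sigma> = card {x \<in> {1..n}. inv \<sigma> x < x \<and> x > \<sigma> x}"

definition nest_i :: "nat \<Rightarrow> (nat \<Rightarrow> nat) \<Rightarrow> nat \<Rightarrow> nat" where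
  "nest_i n \<sigma> i = card {j \<in> {1..n}. (j < i \<and> i < \<sigma> i \<and> \<sigma> i < \<sigma> j)
                                    \<or> (\<sigma> j < \<sigma> i \<and> \<sigma> i \<le> i \<and> i < j)}"

definition cros_i :: "nat \<Rightarrow> (nat \<Rightarrow> nat) \<Rightarrow> nat \<Rightarrow> nat" where
  "cros_i n \<sigma> i = card {j \<in> {1..n}. (j < i \<and> i < \<sigma> j \<and> \<sigma> j < \<sigma> i)
                                    \<or> (\<sigma> i < \<sigma> j \<and> \<sigma> j \<le> i \<and> i < j)}"

definition nest :: "nat \<Rightarrow> (nat \<Rightarrow> nat) \<Rightarrow> nat" where
  "nest n \<sigma> = (\<Sum>i=1..n. nest_i n \<sigma> i)"

definition cros :: "nat \<Rightarrow> (nat \<Rightarrow> nat) \<Rightarrow> nat" where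
  "cros n \<sigma> = (\<Sum>i=1..n. cros_i n \<sigma> i)"

definition Pgen :: "('a \<Rightarrow> nat) list \<Rightarrow> 'a set \<Rightarrow> real list \<Rightarrow> real" where
  "Pgen stats \<Omega> ts = (\<Sum>\<sigma>\<in>\<Omega>. prod_list (map2 (\<lambda>s t. t ^ s \<sigma>) stats ts))"

end

theory Submission
  imports Defs
begin

definition restr :: "nat \<Rightarrow> (nat\<times>nat) set \<Rightarrow> (nat\<times>nat) set" where
  "restr m R = R \<inter> ({1..m} \<times> {1..m})"

definition PI :: "nat \<Rightarrow> (nat\<times>nat) set set" where
  "PI m = {R. R \<subseteq> {1..m} \<times> {1..m} \<and> (\<forall>a b c. (a,b)\<in>R \<longrightarrow> (a,c)\<in>R \<longrightarrow> b = c)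
              \<and> (\<forall>a b c. (a,c)\<in>R \<longrightarrow> (b,c)\<in>R \<longrightarrow> a = b)}"

definition opU :: "nat \<Rightarrow> (nat\<times>nat) set \<Rightarrow> nat set" where
  "opU m R = {w\<in>{1..m}. \<forall>y. (w,y) \<notin> R}"
definition opV :: "nat \<Rightarrow> (nat\<times>nat) set \<Rightarrow> nat set" where
  "opV m R = {w\<in>{1..m}. \<forall>y. (y,w) \<notin> R}"

definition rk :: "real \<Rightarrow> real \<Rightarrow> nat set \<Rightarrow> nat \<Rightarrow> real" where
  "rk p q U u = p ^ card {w\<in>U. w<u} * q ^ card {w\<in>U. u<w}"

definition br :: "real \<Rightarrow> real \<Rightarrow> nat \<Rightarrow> real" where
  "br p q h = (\<Sum>i<h. p^i * q^(h-1-i))"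

definition loc :: "real \<Rightarrow> real \<Rightarrow> real \<Rightarrow> real \<Rightarrow> real \<Rightarrow> real \<Rightarrow> real \<Rightarrow> nat \<Rightarrow> (nat\<times>nat) set \<Rightarrow> real" where
"loc p q av ap aa ad af m R = (let x = Suc m; U = opU m (restr m R); V = opV m (restr m R);
    In = {u\<in>{1..m}. (u,x)\<in>R}; Out = {v\<in>{1..m}. (x,v)\<in>R} in
  if (x,x)\<in>R then af * p ^ card V
  else if In \<noteq> {} \<and> Out \<noteq> {} then ap * (\<Sum>u\<in>In. rk p q U u) * (\<Sum>v\<in>Out. rk p q V v)
  else if In \<noteq> {} then aa * (\<Sum>u\<in>In. rk p q U u)
  else if Out \<noteq> {} then ad * q * (\<Sum>v\<in>Out. rk p q V v)
  else av)"

fun Wt :: "real \<Rightarrow> real \<Rightarrow> real \<Rightarrow> real \<Rightarrow> real \<Rightarrow> real \<Rightarrow> real \<Rightarrow> nat \<Rightarrow> (nat\<times>nat) set \<Rightarrow> real" where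
  "Wt p q av ap aa ad af 0 R = 1"
| "Wt p q av ap aa ad af (Suc m) R = Wt p q av ap aa ad af m (restr m R) * loc p q av ap aa ad af m R"

definition Ext :: "nat \<Rightarrow> (nat\<times>nat) set \<Rightarrow> (nat\<times>nat) set set" where
  "Ext m R' = {R', insert (Suc m, Suc m) R'} \<union> (\<lambda>u. insert (u,Suc m) R') ` opU m R'
     \<union> (\<lambda>v. insert (Suc m,v) R') ` opV m R'
     \<union> (\<lambda>(u,v). insert (u,Suc m) (insert (Suc m,v) R')) ` (opU m R' \<times> opV m R')"

lemma finite_PI: "finite (PI m)"
proof -
  have "PI m \<subseteq> Pow ({1..m} \<times> {1..m})" unfolding PI_def by auto
  then show ?thesis by (rule finite_subset) auto
qed

lemma PI_fin: "R \<in> PI m \<Longrightarrow> finite R"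
proof -
  assume "R \<in> PI m"
  then have "R \<subseteq> {1..m}\<times>{1..m}" unfolding PI_def by blast
  moreover have "finite ({1..m}\<times>{1..m::nat})" by simp
  ultimately show ?thesis by (rule finite_subset)
qed

lemma ext_char:
  assumes R': "R' \<in> PI m"
  shows "{R\<in>PI (Suc m). restr m R = R'} = Ext m R'"
proof
  show "{R\<in>PI (Suc m). restr m R = R'} \<subseteq> Ext m R'"
  proof
    fix R assume "R \<in> {R\<in>PI (Suc m). restr m R = R'}"
    then have R: "R \<in> PI (Suc m)" and rR: "restr m R = R'" by auto
    let ?x = "Suc m"
    have sub: "R \<subseteq> {1..Suc m}\<times>{1..Suc m}" and fn: "\<And>a b c. (a,b)\<in>R \<Longrightarrow> (a,c)\<in>R \<Longrightarrow> b = c"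
      and ij: "\<And>a b c. (a,c)\<in>R \<Longrightarrow> (b,c)\<in>R \<Longrightarrow> a = b" using R unfolding PI_def by blast+
    have Rdec: "R = R' \<union> {e\<in>R. fst e = ?x \<or> snd e = ?x}"
      using sub rR unfolding restr_def by (auto simp: le_Suc_eq)
    show "R \<in> Ext m R'"
    proof (cases "(?x,?x) \<in> R")
      case True
      then have "{e\<in>R. fst e = ?x \<or> snd e = ?x} = {(?x,?x)}" using fn ij by auto
      then show ?thesis using Rdec unfolding Ext_def by auto
    next
      case nx: False
      show ?thesis
      proof (cases "\<exists>u. (u,?x)\<in>R")
        case True
        then obtain u where u: "(u,?x)\<in>R" by blast
        have uU: "u \<in> opU m R'" using u sub nx fn rR unfolding opU_def restr_def
          by (auto simp: le_Suc_eq) (metis Suc_n_not_le_n)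
        show ?thesis
        proof (cases "\<exists>v. (?x,v)\<in>R")
          case True
          then obtain v where v: "(?x,v)\<in>R" by blast
          have vV: "v \<in> opV m R'" using v sub nx ij rR unfolding opV_def restr_def
            by (auto simp: le_Suc_eq) (metis Suc_n_not_le_n)
          have "{e\<in>R. fst e = ?x \<or> snd e = ?x} = {(u,?x), (?x,v)}" using u v fn ij by auto
          then have "R = insert (u,?x) (insert (?x,v) R')" using Rdec by auto
          then show ?thesis using uU vV unfolding Ext_def by blast
        next
          case False
          have "{e\<in>R. fst e = ?x \<or> snd e = ?x} = {(u,?x)}" using u False fn ij by auto
          then have "R = insert (u,?x) R'" using Rdec by auto
          then show ?thesis using uU unfolding Ext_def by blast
        qed
      next
        case nu: False
        show ?thesis
        proof (cases "\<exists>v. (?x,v)\<in>R")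
          case True
          then obtain v where v: "(?x,v)\<in>R" by blast
          have vV: "v \<in> opV m R'" using v sub nx ij rR unfolding opV_def restr_def
            by (auto simp: le_Suc_eq) (metis Suc_n_not_le_n)
          have "{e\<in>R. fst e = ?x \<or> snd e = ?x} = {(?x,v)}" using nu v fn ij by auto
          then have "R = insert (?x,v) R'" using Rdec by auto
          then show ?thesis using vV unfolding Ext_def by blast
        next
          case False
          have "{e\<in>R. fst e = ?x \<or> snd e = ?x} = {}" using nu False by auto
          then have "R = R'" using Rdec by auto
          then show ?thesis unfolding Ext_def by blast
        qed
      qed
    qed
  qed
next
  show "Ext m R' \<subseteq> {R\<in>PI (Suc m). restr m R = R'}"
    using R' unfolding Ext_def PI_def opU_def opV_def restr_def
    by (auto simp: le_Suc_eq) 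
qed

lemma br_Suc: "br p q (Suc k) = q * br p q k + p ^ k"
proof -
  have "br p q (Suc k) = (\<Sum>i<k. p^i * q^(Suc k-1-i)) + p^k * q^(Suc k - 1 - k)"
    unfolding br_def by simp
  also have "(\<Sum>i<k. p^i * q^(Suc k-1-i)) = q * br p q k"
    unfolding br_def sum_distrib_left
  proof (rule sum.cong)
    fix i assume "i \<in> {..<k}"
    then have "Suc k - 1 - i = Suc (k - 1 - i)" by auto
    then show "p^i * q^(Suc k-1-i) = q * (p^i * q^(k-1-i))" by simp
  qed simp
  finally show ?thesis by simp
qed

lemma br_0[simp]: "br p q 0 = 0" unfolding br_def by simp

lemma rk_sum: "finite U \<Longrightarrow> (\<Sum>u\<in>U. rk p q U u) = br p q (card U)"
proof (induction "card U" arbitrary: U)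
  case 0
  then show ?case by simp
next
  case (Suc k)
  then have ne: "U \<noteq> {}" by auto
  define M where "M = Max U"
  have MU: "M \<in> U" using Suc.prems ne unfolding M_def by simp
  have Mmax: "\<And>w. w \<in> U \<Longrightarrow> w \<le> M" using Suc.prems unfolding M_def by simp
  define U' where "U' = U - {M}"
  have fU': "finite U'" using Suc.prems unfolding U'_def by simp
  have cU': "card U' = k" using Suc.hyps(2) MU Suc.prems unfolding U'_def by simp
  have UU: "U = insert M U'" "M \<notin> U'" using MU unfolding U'_def by auto
  have "(\<Sum>u\<in>U. rk p q U u) = rk p q U M + (\<Sum>u\<in>U'. rk p q U u)"
    using UU fU' by simp
  also have "rk p q U M = p ^ k"
  proof -
    have "{w\<in>U. w<M} = U'" using Mmax UU unfolding U'_def by force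
    moreover have "{w\<in>U. M<w} = {}" using Mmax by force
    ultimately show ?thesis unfolding rk_def using cU' by (simp only: card.empty power_0)
  qed
  also have "(\<Sum>u\<in>U'. rk p q U u) = (\<Sum>u\<in>U'. q * rk p q U' u)"
  proof (rule sum.cong)
    fix u assume u: "u \<in> U'"
    then have uM: "u < M" using Mmax UU by (metis insert_iff le_neq_implies_less)
    have "{w\<in>U. w<u} = {w\<in>U'. w<u}" using uM UU by auto
    moreover have "{w\<in>U. u<w} = insert M {w\<in>U'. u<w}" using uM UU by auto
    moreover have "finite {w\<in>U'. u<w}" using fU' by simp
    moreover have "M \<notin> {w\<in>U'. u<w}" using UU by simp
    ultimately show "rk p q U u = q * rk p q U' u" unfolding rk_def by simp
  qed simp
  also have "\<dots> = q * br p q k" using Suc.hyps(1)[OF cU'[symmetric] fU'] cU' by (simp add: sum_distrib_left[symmetric])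
  finally show ?case using br_Suc[of p q k] Suc.hyps(2)[symmetric] by simp
qed

lemma card_Dom: assumes "R \<in> PI m" shows "card (opU m R) + card R = m"
proof -
  have sub: "R \<subseteq> {1..m}\<times>{1..m}" and fn: "\<And>a b c. (a,b)\<in>R \<Longrightarrow> (a,c)\<in>R \<Longrightarrow> b = c"
    using assms unfolding PI_def by blast+
  have "inj_on fst R" using fn by (force simp: inj_on_def)
  then have c: "card (fst ` R) = card R" by (rule card_image)
  have "opU m R = {1..m} - fst ` R" unfolding opU_def by force
  moreover have "fst ` R \<subseteq> {1..m}" using sub by force
  ultimately have "card (opU m R) = m - card (fst ` R)" by (simp add: card_Diff_subset finite_subset)
  moreover have "card (fst ` R) \<le> m" using \<open>fst ` R \<subseteq> {1..m}\<close> by (metis card_atLeastAtMost card_mono diff_Suc_1 finite_atLeastAtMost)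
  ultimately show ?thesis using c by simp
qed

lemma card_Ran: assumes "R \<in> PI m" shows "card (opV m R) + card R = m"
proof -
  have sub: "R \<subseteq> {1..m}\<times>{1..m}" and ij: "\<And>a b c. (a,c)\<in>R \<Longrightarrow> (b,c)\<in>R \<Longrightarrow> a = b"
    using assms unfolding PI_def by blast+
  have "inj_on snd R" using ij by (force simp: inj_on_def)
  then have c: "card (snd ` R) = card R" by (rule card_image)
  have "opV m R = {1..m} - snd ` R" unfolding opV_def by force
  moreover have "snd ` R \<subseteq> {1..m}" using sub by force
  ultimately have "card (opV m R) = m - card (snd ` R)" by (simp add: card_Diff_subset finite_subset)
  moreover have "card (snd ` R) \<le> m" using \<open>snd ` R \<subseteq> {1..m}\<close> by (metis card_atLeastAtMost card_mono diff_Suc_1 finite_atLeastAtMost)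
  ultimately show ?thesis using c by simp
qed

lemma card_UV: "R \<in> PI m \<Longrightarrow> card (opV m R) = card (opU m R)"
  using card_Dom card_Ran by (metis add_right_cancel)

lemma Ext_props: assumes "R' \<in> PI m" "R \<in> Ext m R'"
  shows "R \<in> PI (Suc m)" "restr m R = R'"
  using ext_char[OF assms(1)] assms(2) by blast+

lemma PI_bound: "R \<in> PI m \<Longrightarrow> (a,b) \<in> R \<Longrightarrow> 1 \<le> a \<and> a \<le> m \<and> 1 \<le> b \<and> b \<le> m"
  unfolding PI_def by auto

lemma restr_self: "R \<in> PI m \<Longrightarrow> restr m R = R"
  unfolding restr_def PI_def by auto

lemma restr_ins: "a = Suc m \<or> b = Suc m \<Longrightarrow> restr m (insert (a,b) R) = restr m R"
  unfolding restr_def by auto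

context
  fixes p q av ap aa ad af :: real and m :: nat and R' :: "(nat\<times>nat) set"
  assumes R': "R' \<in> PI m"
begin

private lemma nx: "(a, Suc m) \<notin> R'" "(Suc m, a) \<notin> R'"
  using PI_bound[OF R'] Suc_n_not_le_n by blast+

lemma loc1: "loc p q av ap aa ad af m R' = av"
  unfolding loc_def Let_def restr_self[OF R'] using nx by simp

lemma loc2: "loc p q av ap aa ad af m (insert (Suc m, Suc m) R') = af * p ^ card (opV m R')"
proof -
  have "restr m (insert (Suc m, Suc m) R') = R'"
    by (simp add: restr_ins restr_self[OF R'])
  then show ?thesis unfolding loc_def Let_def by simp
qed

lemma loc3: assumes "u \<in> opU m R'"
  shows "loc p q av ap aa ad af m (insert (u, Suc m) R') = aa * rk p q (opU m R') u"
proof -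
  have r: "restr m (insert (u, Suc m) R') = R'"
    by (simp add: restr_ins restr_self[OF R'])
  have u: "u \<in> {1..m}" using assms unfolding opU_def by auto
  have "{ua \<in> {1..m}. (ua, Suc m) \<in> insert (u, Suc m) R'} = {u}" using u nx by auto
  moreover have "{v \<in> {1..m}. (Suc m, v) \<in> insert (u, Suc m) R'} = {}" using u nx by auto
  moreover have "(Suc m, Suc m) \<notin> insert (u, Suc m) R'" using u nx by auto
  ultimately show ?thesis unfolding loc_def Let_def r by simp
qed

lemma loc4: assumes "v \<in> opV m R'"
  shows "loc p q av ap aa ad af m (insert (Suc m, v) R') = ad * q * rk p q (opV m R') v"
proof -
  have r: "restr m (insert (Suc m, v) R') = R'"
    by (simp add: restr_ins restr_self[OF R'])
  have v: "v \<in> {1..m}" using assms unfolding opV_def by auto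
  have "{ua \<in> {1..m}. (ua, Suc m) \<in> insert (Suc m, v) R'} = {}" using v nx by auto
  moreover have "{w \<in> {1..m}. (Suc m, w) \<in> insert (Suc m, v) R'} = {v}" using v nx by auto
  moreover have "(Suc m, Suc m) \<notin> insert (Suc m, v) R'" using v nx by auto
  ultimately show ?thesis unfolding loc_def Let_def r by simp
qed

lemma loc5: assumes "u \<in> opU m R'" "v \<in> opV m R'"
  shows "loc p q av ap aa ad af m (insert (u, Suc m) (insert (Suc m, v) R')) = ap * rk p q (opU m R') u * rk p q (opV m R') v"
proof -
  have r: "restr m (insert (u, Suc m) (insert (Suc m, v) R')) = R'"
    by (simp add: restr_ins restr_self[OF R'])
  have u: "u \<in> {1..m}" using assms unfolding opU_def by auto
  have v: "v \<in> {1..m}" using assms unfolding opV_def by auto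
  have "{ua \<in> {1..m}. (ua, Suc m) \<in> insert (u, Suc m) (insert (Suc m, v) R')} = {u}" using u v nx by auto
  moreover have "{w \<in> {1..m}. (Suc m, w) \<in> insert (u, Suc m) (insert (Suc m, v) R')} = {v}" using u v nx by auto
  moreover have "(Suc m, Suc m) \<notin> insert (u, Suc m) (insert (Suc m, v) R')" using u v nx by auto
  ultimately show ?thesis unfolding loc_def Let_def r by simp
qed

lemma opU1: "opU (Suc m) R' = insert (Suc m) (opU m R')"
  unfolding opU_def using nx PI_bound[OF R'] by (auto simp: le_Suc_eq)
lemma opU2: "opU (Suc m) (insert (Suc m, Suc m) R') = opU m R'"
  unfolding opU_def opV_def using nx by (auto simp: le_Suc_eq)
lemma opU3: "u \<in> opU m R' \<Longrightarrow> opU (Suc m) (insert (u, Suc m) R') = insert (Suc m) (opU m R' - {u})"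
  unfolding opU_def opV_def using nx by (auto simp: le_Suc_eq)
lemma opU4: "v \<in> opV m R' \<Longrightarrow> opU (Suc m) (insert (Suc m, v) R') = opU m R'"
  unfolding opU_def opV_def using nx by (auto simp: le_Suc_eq)
lemma opU5: "u \<in> opU m R' \<Longrightarrow> v \<in> opV m R' \<Longrightarrow> opU (Suc m) (insert (u, Suc m) (insert (Suc m, v) R')) = opU m R' - {u}"
  unfolding opU_def opV_def using nx by (auto simp: le_Suc_eq)


lemma sum_cart: "(\<Sum>(u,v)\<in>U\<times>V. (c::real) * (f u * g v)) = c * (sum f U * sum g V)"
proof -
  have "c * (sum f U * sum g V) = c * (\<Sum>u\<in>U. \<Sum>v\<in>V. f u * g v)"
    by (simp only: sum_product)
  also have "\<dots> = (\<Sum>u\<in>U. c * (\<Sum>v\<in>V. f u * g v))" by (rule sum_distrib_left)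
  also have "\<dots> = (\<Sum>u\<in>U. \<Sum>v\<in>V. c * (f u * g v))" by (simp only: sum_distrib_left)
  also have "\<dots> = (\<Sum>(u,v)\<in>U\<times>V. c * (f u * g v))" by (rule sum.cartesian_product)
  finally show ?thesis by simp
qed

lemma finU: "finite (opU m R')" and finV: "finite (opV m R')"
  unfolding opU_def opV_def by auto

lemma Uin: "u \<in> opU m R' \<Longrightarrow> 1 \<le> u \<and> u \<le> m" and Vin: "v \<in> opV m R' \<Longrightarrow> 1 \<le> v \<and> v \<le> m"
  unfolding opU_def opV_def by auto

lemma fiber:
  "(\<Sum>R\<in>Ext m R'. g (card (opU (Suc m) R)) * loc p q av ap aa ad af m R)
    = g (card (opU m R') + 1) * av
      + g (card (opU m R')) * (af * p ^ card (opU m R') + (aa + q * ad) * br p q (card (opU m R')))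
      + g (card (opU m R') - 1) * ap * br p q (card (opU m R')) * br p q (card (opU m R'))"
proof -
  define U where "U = opU m R'"
  define V where "V = opV m R'"
  define h where "h = card U"
  have cV: "card V = h" unfolding V_def h_def U_def using card_UV[OF R'] .
  have fU: "finite U" and fV: "finite V" unfolding U_def V_def using finU finV .
  have xU: "Suc m \<notin> U" using Uin unfolding U_def by fastforce
  define F where "F R = g (card (opU (Suc m) R)) * loc p q av ap aa ad af m R" for R
  define I where "I = insert (Suc m, Suc m) R'"
  define A where "A = (\<lambda>u. insert (u,Suc m) R') ` U"
  define B where "B = (\<lambda>v. insert (Suc m,v) R') ` V"
  define C where "C = (\<lambda>(u,v). insert (u,Suc m) (insert (Suc m,v) R')) ` (U \<times> V)"
  have E: "Ext m R' = (({R', I} \<union> A) \<union> B) \<union> C"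
    unfolding Ext_def I_def A_def B_def C_def U_def V_def by simp
  have nI: "R' \<noteq> I" unfolding I_def using nx by auto
  have uU: "\<And>u. u \<in> U \<Longrightarrow> u \<noteq> Suc m" and vV: "\<And>v. v \<in> V \<Longrightarrow> v \<noteq> Suc m"
    using Uin Vin unfolding U_def V_def by fastforce+
  have injA: "inj_on (\<lambda>u. insert (u,Suc m) R') U"
    by (rule inj_onI) (metis Pair_inject insert_iff nx(1))
  have injB: "inj_on (\<lambda>v. insert (Suc m,v) R') V"
    by (rule inj_onI) (metis Pair_inject insert_iff nx(2))
  have injC: "inj_on (\<lambda>(u,v). insert (u,Suc m) (insert (Suc m,v) R')) (U \<times> V)"
  proof (rule inj_onI, clarsimp)
    fix u v u' v' assume u: "u \<in> U" "u' \<in> U" and v: "v \<in> V" "v' \<in> V"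
      and eq: "insert (u, Suc m) (insert (Suc m, v) R') = insert (u', Suc m) (insert (Suc m, v') R')"
    have "(u, Suc m) \<in> insert (u', Suc m) (insert (Suc m, v') R')" using eq by blast
    then have "u = u'" using nx uU u by auto
    moreover have "(Suc m, v) \<in> insert (u', Suc m) (insert (Suc m, v') R')" using eq by blast
    then have "v = v'" using nx vV v by auto
    ultimately show "u = u' \<and> v = v'" by simp
  qed
  have fA: "finite A" "finite B" "finite C" unfolding A_def B_def C_def using fU fV by auto
  have d1: "{R', I} \<inter> A = {}" unfolding A_def I_def using nx uU by (auto simp: set_eq_iff) (metis insertI1 insert_iff prod.inject nx uU vV)+
  have d2: "({R', I} \<union> A) \<inter> B = {}" unfolding A_def B_def I_def using nx uU vV by (auto simp: set_eq_iff) (metis insertI1 insert_iff prod.inject nx uU vV)+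
  have d3: "(({R', I} \<union> A) \<union> B) \<inter> C = {}" unfolding A_def B_def C_def I_def using nx uU vV by (auto simp: set_eq_iff) (metis insertI1 insert_iff prod.inject nx uU vV)+
  have "sum F (Ext m R') = sum F {R', I} + sum F A + sum F B + sum F C"
  proof -
    have f0: "finite {R', I}" by simp
    have "sum F ((({R', I} \<union> A) \<union> B) \<union> C) = sum F (({R', I} \<union> A) \<union> B) + sum F C"
      by (rule sum.union_disjoint) (use f0 fA d3 in auto)
    also have "sum F (({R', I} \<union> A) \<union> B) = sum F ({R', I} \<union> A) + sum F B"
      by (rule sum.union_disjoint) (use f0 fA d2 in auto)
    also have "sum F ({R', I} \<union> A) = sum F {R', I} + sum F A"
      by (rule sum.union_disjoint) (use f0 fA d1 in auto)
    finally show ?thesis unfolding E .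
  qed
  also have "sum F {R', I} = g (h+1) * av + g h * (af * p ^ h)"
    using nI unfolding F_def I_def
    by (simp add: loc1 loc2 opU1 opU2 h_def U_def cV[unfolded V_def] card_insert_if finU xU[unfolded U_def])
  also have "sum F A = g h * aa * br p q h"
  proof -
    have "sum F A = (\<Sum>u\<in>U. F (insert (u,Suc m) R'))" unfolding A_def by (rule sum.reindex_cong[OF injA]) auto
    also have "\<dots> = (\<Sum>u\<in>U. g h * aa * rk p q U u)"
    proof (rule sum.cong)
      fix u assume u: "u \<in> U"
      have "card (insert (Suc m) (U - {u})) = h" using u xU fU unfolding h_def
        by (simp add: card_insert_if) (metis One_nat_def Suc_pred card_gt_0_iff empty_iff)
      then show "F (insert (u,Suc m) R') = g h * aa * rk p q U u"
        unfolding F_def using u by (simp add: opU3 loc3 U_def)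
    qed simp
    finally show ?thesis by (simp add: sum_distrib_left[symmetric] rk_sum fU h_def)
  qed
  also have "sum F B = g h * ad * q * br p q h"
  proof -
    have "sum F B = (\<Sum>v\<in>V. F (insert (Suc m,v) R'))" unfolding B_def by (rule sum.reindex_cong[OF injB]) auto
    also have "\<dots> = (\<Sum>v\<in>V. g h * ad * q * rk p q V v)"
    proof (rule sum.cong)
      fix v assume v: "v \<in> V"
      show "F (insert (Suc m,v) R') = g h * ad * q * rk p q V v"
        unfolding F_def using v by (simp add: opU4 loc4 U_def V_def h_def)
    qed simp
    finally show ?thesis by (simp add: sum_distrib_left[symmetric] rk_sum fV cV)
  qed
  also have "sum F C = g (h-1) * ap * br p q h * br p q h"
  proof -
    have "sum F C = (\<Sum>(u,v)\<in>U\<times>V. F (insert (u,Suc m) (insert (Suc m,v) R')))"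
      unfolding C_def by (rule sum.reindex_cong[OF injC]) auto
    also have "\<dots> = (\<Sum>(u,v)\<in>U\<times>V. g (h-1) * ap * (rk p q U u * rk p q V v))"
    proof (rule sum.cong)
      fix e assume e: "e \<in> U \<times> V"
      obtain u v where uv: "e = (u,v)" "u \<in> U" "v \<in> V" using e by auto
      have "card (U - {u}) = h - 1" using uv fU unfolding h_def by simp
      then show "(case e of (u,v) \<Rightarrow> F (insert (u,Suc m) (insert (Suc m,v) R'))) = (case e of (u,v) \<Rightarrow> g (h-1) * ap * (rk p q U u * rk p q V v))"
        unfolding F_def using uv by (simp add: opU5 loc5 U_def V_def)
    qed simp
    also have "\<dots> = g (h-1) * ap * ((\<Sum>u\<in>U. rk p q U u) * (\<Sum>v\<in>V. rk p q V v))"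
      by (rule sum_cart)
    finally show ?thesis by (simp add: rk_sum fU fV cV h_def)
  qed
  finally show ?thesis unfolding F_def h_def U_def by (simp add: algebra_simps)
qed

end


lemma restr_PI: "R \<in> PI (Suc m) \<Longrightarrow> restr m R \<in> PI m"
  unfolding PI_def restr_def by auto

definition KK :: "real \<Rightarrow> real \<Rightarrow> real \<Rightarrow> real \<Rightarrow> real \<Rightarrow> real \<Rightarrow> real \<Rightarrow> (nat \<Rightarrow> real) \<Rightarrow> nat \<Rightarrow> real" where
  "KK p q av ap aa ad af g h = g (h + 1) * av + g h * (af * p ^ h + (aa + q * ad) * br p q h)
      + g (h - 1) * ap * br p q h * br p q h"

lemma step:
  "(\<Sum>R\<in>PI (Suc m). g (card (opU (Suc m) R)) * Wt p q av ap aa ad af (Suc m) R)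
   = (\<Sum>R'\<in>PI m. Wt p q av ap aa ad af m R' * KK p q av ap aa ad af g (card (opU m R')))"
proof -
  define F where "F R = g (card (opU (Suc m) R)) * Wt p q av ap aa ad af (Suc m) R" for R
  have "sum F (PI (Suc m)) = (\<Sum>R'\<in>PI m. sum F {R\<in>PI (Suc m). restr m R = R'})"
    by (rule sum.group[symmetric]) (use finite_PI restr_PI in auto)
  also have "\<dots> = (\<Sum>R'\<in>PI m. Wt p q av ap aa ad af m R' * KK p q av ap aa ad af g (card (opU m R')))"
  proof (rule sum.cong)
    fix R' assume R': "R' \<in> PI m"
    have "sum F {R\<in>PI (Suc m). restr m R = R'} = sum F (Ext m R')" using ext_char[OF R'] by simp
    also have "\<dots> = (\<Sum>R\<in>Ext m R'. Wt p q av ap aa ad af m R' * (g (card (opU (Suc m) R)) * loc p q av ap aa ad af m R))"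
      by (rule sum.cong) (auto simp: F_def Ext_props(2)[OF R'])
    also have "\<dots> = Wt p q av ap aa ad af m R' * KK p q av ap aa ad af g (card (opU m R'))"
      by (simp only: sum_distrib_left[symmetric] fiber[OF R'] KK_def)
    finally show "sum F {R\<in>PI (Suc m). restr m R = R'} = Wt p q av ap aa ad af m R' * KK p q av ap aa ad af g (card (opU m R'))" .
  qed simp
  finally show ?thesis unfolding F_def .
qed

lemma PI_0: "PI 0 = {{}}" unfolding PI_def by auto

lemma invariant:
  assumes v: "av1 = mu * av2" and pk: "ap2 = mu * ap1" and l: "aa1 + q * ad1 = aa2 + q * ad2" and f: "af1 = af2"
  shows "\<forall>g. (\<Sum>R\<in>PI m. g (card (opU m R)) * Wt p q av1 ap1 aa1 ad1 af1 m R)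
          = (\<Sum>R\<in>PI m. (g (card (opU m R)) * mu ^ card (opU m R)) * Wt p q av2 ap2 aa2 ad2 af2 m R)"
proof (induction m)
  case 0
  show ?case by (simp add: PI_0 opU_def)
next
  case (Suc m)
  show ?case
  proof
    fix g :: "nat \<Rightarrow> real"
    define g2 where "g2 h = g h * mu ^ h" for h
    have K: "KK p q av2 ap2 aa2 ad2 af2 g2 h = KK p q av1 ap1 aa1 ad1 af1 g h * mu ^ h" for h
    proof (cases h)
      case 0
      then show ?thesis unfolding KK_def g2_def using v l f by (simp add: algebra_simps)
    next
      case (Suc k)
      then show ?thesis unfolding KK_def g2_def using v l f pk by (simp add: algebra_simps)
    qed
    have "(\<Sum>R\<in>PI (Suc m). g (card (opU (Suc m) R)) * Wt p q av1 ap1 aa1 ad1 af1 (Suc m) R)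
       = (\<Sum>R'\<in>PI m. Wt p q av1 ap1 aa1 ad1 af1 m R' * KK p q av1 ap1 aa1 ad1 af1 g (card (opU m R')))"
      by (rule step)
    also have "\<dots> = (\<Sum>R'\<in>PI m. KK p q av1 ap1 aa1 ad1 af1 g (card (opU m R')) * Wt p q av1 ap1 aa1 ad1 af1 m R')"
      by (simp add: mult.commute)
    also have "\<dots> = (\<Sum>R'\<in>PI m. (KK p q av1 ap1 aa1 ad1 af1 g (card (opU m R')) * mu ^ card (opU m R')) * Wt p q av2 ap2 aa2 ad2 af2 m R')"
      using Suc.IH by blast
    also have "\<dots> = (\<Sum>R'\<in>PI m. Wt p q av2 ap2 aa2 ad2 af2 m R' * KK p q av2 ap2 aa2 ad2 af2 g2 (card (opU m R')))"
      by (simp add: K mult.commute)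
    also have "\<dots> = (\<Sum>R\<in>PI (Suc m). g2 (card (opU (Suc m) R)) * Wt p q av2 ap2 aa2 ad2 af2 (Suc m) R)"
      by (rule step[symmetric])
    finally show "(\<Sum>R\<in>PI (Suc m). g (card (opU (Suc m) R)) * Wt p q av1 ap1 aa1 ad1 af1 (Suc m) R)
          = (\<Sum>R\<in>PI (Suc m). (g (card (opU (Suc m) R)) * mu ^ card (opU (Suc m) R)) * Wt p q av2 ap2 aa2 ad2 af2 (Suc m) R)"
      unfolding g2_def .
  qed
qed


definition Rs :: "nat \<Rightarrow> (nat \<Rightarrow> nat) \<Rightarrow> (nat\<times>nat) set" where
  "Rs m s = {(i, s i) | i. i \<in> {1..m} \<and> s i \<in> {1..m}}"

lemma Rs_PI: assumes "s permutes {1..n}" shows "Rs m s \<in> PI m"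
proof -
  have "inj s" using assms by (rule permutes_inj)
  then show ?thesis unfolding Rs_def PI_def
    by (intro CollectI conjI; clarsimp) (metis injD)
qed

lemma Rs_lvl: assumes "s permutes {1..n}" shows "opU n (Rs n s) = {}"
  using permutes_in_image[OF assms] unfolding opU_def Rs_def by auto

lemma Rs_bij: "bij_betw (Rs n) (Sym n) {R\<in>PI n. card (opU n R) = 0}"
proof (rule bij_betw_imageI)
  show "inj_on (Rs n) (Sym n)"
  proof (rule inj_onI)
    fix s t assume s: "s \<in> Sym n" and t: "t \<in> Sym n" and eq: "Rs n s = Rs n t"
    have sp: "s permutes {1..n}" and tp: "t permutes {1..n}" using s t unfolding Sym_def by auto
    show "s = t"
    proof
      fix i show "s i = t i"
      proof (cases "i \<in> {1..n}")
        case True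
        then have "(i, s i) \<in> Rs n t" using eq permutes_in_image[OF sp] unfolding Rs_def by auto
        then show ?thesis unfolding Rs_def by auto
      next
        case False
        then show ?thesis using sp tp by (simp add: permutes_not_in)
      qed
    qed
  qed
next
  show "Rs n ` Sym n = {R\<in>PI n. card (opU n R) = 0}"
  proof
    show "Rs n ` Sym n \<subseteq> {R\<in>PI n. card (opU n R) = 0}"
      using Rs_PI Rs_lvl unfolding Sym_def by fastforce
  next
    show "{R\<in>PI n. card (opU n R) = 0} \<subseteq> Rs n ` Sym n"
    proof
      fix R assume "R \<in> {R\<in>PI n. card (opU n R) = 0}"
      then have R: "R \<in> PI n" and c: "card (opU n R) = 0" by auto
      have e: "opU n R = {}" using c finU[OF R] by simp
      have sub: "R \<subseteq> {1..n}\<times>{1..n}" and fn: "\<And>a b c. (a,b)\<in>R \<Longrightarrow> (a,c)\<in>R \<Longrightarrow> b = c"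
        and ij: "\<And>a b c. (a,c)\<in>R \<Longrightarrow> (b,c)\<in>R \<Longrightarrow> a = b" using R unfolding PI_def by blast+
      have ex: "\<And>i. i \<in> {1..n} \<Longrightarrow> \<exists>y. (i,y) \<in> R" using e unfolding opU_def by blast
      define s where "s i = (if i \<in> {1..n} then (THE y. (i,y) \<in> R) else i)" for i
      have sR: "\<And>i. i \<in> {1..n} \<Longrightarrow> (i, s i) \<in> R"
      proof -
        fix i assume i: "i \<in> {1..n}"
        then obtain y where y: "(i,y) \<in> R" using ex by blast
        then have "(THE y. (i,y) \<in> R) = y" using fn by blast
        then show "(i, s i) \<in> R" using y i unfolding s_def by simp
      qed
      have img: "s ` {1..n} \<subseteq> {1..n}" using sR sub by blast
      have inj: "inj_on s {1..n}"
      proof (rule inj_onI)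
        fix a b assume "a \<in> {1..n}" "b \<in> {1..n}" "s a = s b"
        then show "a = b" using sR[of a] sR[of b] ij by simp
      qed
      have "s ` {1..n} = {1..n}" using endo_inj_surj[OF _ img inj] by simp
      then have "bij_betw s {1..n} {1..n}" using inj by (simp add: bij_betw_def)
      then have sp: "s permutes {1..n}" by (rule bij_imp_permutes) (auto simp: s_def)
      have "Rs n s = R"
      proof
        show "Rs n s \<subseteq> R" unfolding Rs_def using sR by auto
        show "R \<subseteq> Rs n s"
        proof
          fix e assume e: "e \<in> R"
          obtain a b where ab: "e = (a,b)" by (cases e)
          have a: "a \<in> {1..n}" "b \<in> {1..n}" using sub e ab by auto
          have "s a = b" using sR[OF a(1)] e ab fn by blast
          then show "e \<in> Rs n s" unfolding Rs_def using a ab by auto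
        qed
      qed
      then show "R \<in> Rs n ` Sym n" using sp unfolding Sym_def by blast
    qed
  qed
qed


lemma restr_Rs: "restr k (Rs (Suc k) s) = Rs k s"
  unfolding restr_def Rs_def by auto

lemma Wt_Rs: "Wt p q av ap aa ad af m (Rs m s) = (\<Prod>k<m. loc p q av ap aa ad af k (Rs (Suc k) s))"
  by (induction m) (simp_all add: restr_Rs)

context
  fixes n :: nat and s :: "nat \<Rightarrow> nat"
  assumes sp: "s permutes {1..n}"
begin

lemma s_in: "i \<in> {1..n} \<Longrightarrow> s i \<in> {1..n}" using permutes_in_image[OF sp] by simp
lemma si_in: "i \<in> {1..n} \<Longrightarrow> inv s i \<in> {1..n}" using permutes_in_image[OF permutes_inv[OF sp]] by simp
lemma s_inv: "s (inv s x) = x" "inv s (s x) = x" using permutes_inverses[OF sp] by auto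
lemma s_inj: "s a = s b \<longleftrightarrow> a = b" using permutes_inj[OF sp] by (auto dest: injD)

lemma opU_Rs: "k < n \<Longrightarrow> opU k (Rs k s) = {w\<in>{1..k}. k < s w}"
  unfolding opU_def Rs_def using s_in by fastforce

lemma opV_Rs: "k < n \<Longrightarrow> opV k (Rs k s) = {w\<in>{1..k}. k < inv s w}"
proof -
  assume k: "k < n"
  have "\<And>w. w \<in> {1..k} \<Longrightarrow> (\<forall>y. (y,w) \<notin> Rs k s) \<longleftrightarrow> k < inv s w"
  proof -
    fix w assume w: "w \<in> {1..k}"
    have iw: "inv s w \<in> {1..n}" using si_in w k by auto
    show "(\<forall>y. (y,w) \<notin> Rs k s) \<longleftrightarrow> k < inv s w"
    proof
      assume "\<forall>y. (y,w) \<notin> Rs k s"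
      then have "(inv s w, w) \<notin> Rs k s" by blast
      then show "k < inv s w" using w iw s_inv unfolding Rs_def by (metis (mono_tags, lifting) atLeastAtMost_iff mem_Collect_eq not_le_imp_less)
    next
      assume "k < inv s w"
      then show "\<forall>y. (y,w) \<notin> Rs k s" unfolding Rs_def using s_inv by auto
    qed
  qed
  then show ?thesis unfolding opV_def by auto
qed


lemma Rs_Suc: "Rs (Suc k) s = Rs k s \<union> {(i, s i) | i. i \<in> {1..Suc k} \<and> s i \<in> {1..Suc k} \<and> (i = Suc k \<or> s i = Suc k)}"
  unfolding Rs_def by (auto simp: le_Suc_eq)

lemma loc_Rs: assumes k: "k < n"
  shows "loc p q av ap aa ad af k (Rs (Suc k) s) =
   (if s (Suc k) = Suc k then af * p ^ card (opV k (Rs k s))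
    else if inv s (Suc k) < Suc k \<and> s (Suc k) < Suc k then ap * rk p q (opU k (Rs k s)) (inv s (Suc k)) * rk p q (opV k (Rs k s)) (s (Suc k))
    else if inv s (Suc k) < Suc k then aa * rk p q (opU k (Rs k s)) (inv s (Suc k))
    else if s (Suc k) < Suc k then ad * q * rk p q (opV k (Rs k s)) (s (Suc k))
    else av)"
proof -
  define x where "x = Suc k"
  define a where "a = inv s x"
  define b where "b = s x"
  have R': "Rs k s \<in> PI k" using Rs_PI[OF sp] .
  have xn: "x \<in> {1..n}" using k unfolding x_def by auto
  have an: "a \<in> {1..n}" and bn: "b \<in> {1..n}" unfolding a_def b_def using si_in s_in xn by auto
  have sa: "s a = x" and ib: "inv s b = x" unfolding a_def b_def using s_inv by auto
  have aU: "a \<in> opU k (Rs k s)" if "a < x" using that an sa k unfolding opU_Rs[OF k] x_def by auto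
  have bV: "b \<in> opV k (Rs k s)" if "b < x" using that bn ib k unfolding opV_Rs[OF k] x_def by auto
  have N: "{(i, s i) | i. i \<in> {1..Suc k} \<and> s i \<in> {1..Suc k} \<and> (i = Suc k \<or> s i = Suc k)}
        = (if a < x then {(a,x)} else {}) \<union> (if b \<le> x then {(x,b)} else {})"
  proof (unfold x_def[symmetric], intro equalityI subsetI)
    have ia: "\<And>i. s i = x \<longleftrightarrow> i = a" unfolding a_def using s_inv by auto
    fix e assume "e \<in> {(i, s i) | i. i \<in> {1..x} \<and> s i \<in> {1..x} \<and> (i = x \<or> s i = x)}"
    then obtain i where e: "e = (i, s i)" "i \<in> {1..x}" "s i \<in> {1..x}" "i = x \<or> s i = x" by blast
    show "e \<in> (if a < x then {(a,x)} else {}) \<union> (if b \<le> x then {(x,b)} else {})"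
    proof (cases "i = x")
      case True
      then show ?thesis using e unfolding b_def by auto
    next
      case False
      then have "s i = x" "i = a" using e ia by auto
      then show ?thesis using e False by auto
    qed
  next
    fix e assume e: "e \<in> (if a < x then {(a,x)} else {}) \<union> (if b \<le> x then {(x,b)} else {})"
    show "e \<in> {(i, s i) | i. i \<in> {1..x} \<and> s i \<in> {1..x} \<and> (i = x \<or> s i = x)}"
    proof (cases "e = (a,x) \<and> a < x")
      case True
      then show ?thesis using an sa by auto
    next
      case False
      then have "e = (x,b)" "b \<le> x" using e by (auto split: if_splits)
      then show ?thesis using bn b_def xn by auto
    qed
  qed
  show ?thesis
  proof (cases "b = x")
    case True
    then have "a = x" using ib unfolding a_def by simp
    then have "Rs (Suc k) s = insert (x,x) (Rs k s)" using True Rs_Suc[of k] N by auto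
    then show ?thesis using loc2[OF R'] True unfolding x_def b_def by simp
  next
    case bx: False
    have ax: "a \<noteq> x" using bx sa b_def by auto
    show ?thesis
    proof (cases "a < x")
      case aL: True
      show ?thesis
      proof (cases "b < x")
        case True
        then have "Rs (Suc k) s = insert (a,x) (insert (x,b) (Rs k s))" using aL Rs_Suc[of k] N by auto
        then show ?thesis using loc5[OF R' aU[OF aL] bV[OF True]] True aL bx
          unfolding x_def a_def b_def by simp
      next
        case False
        then have "Rs (Suc k) s = insert (a,x) (Rs k s)" using aL bx Rs_Suc[of k] N by auto
        then show ?thesis using loc3[OF R' aU[OF aL]] False aL bx
          unfolding x_def a_def b_def by simp
      qed
    next
      case aL: False
      show ?thesis
      proof (cases "b < x")
        case True
        then have "Rs (Suc k) s = insert (x,b) (Rs k s)" using aL Rs_Suc[of k] N by auto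
        then show ?thesis using loc4[OF R' bV[OF True]] True aL bx
          unfolding x_def a_def b_def by simp
      next
        case False
        then have "Rs (Suc k) s = Rs k s" using aL bx Rs_Suc[of k] N by auto
        then show ?thesis using loc1[OF R'] False aL bx
          unfolding x_def a_def b_def by simp
      qed
    qed
  qed
qed


lemma claim_a: assumes k: "k < n" and a: "inv s (Suc k) < Suc k"
  shows "card {w\<in>opU k (Rs k s). w < inv s (Suc k)} = nest_i n s (inv s (Suc k))"
proof -
  define x where "x = Suc k"
  define a where "a = inv s x"
  have xn: "x \<in> {1..n}" using k unfolding x_def by auto
  have an: "a \<in> {1..n}" unfolding a_def using si_in xn by auto
  have sa: "s a = x" unfolding a_def using s_inv by auto
  have ax: "a < x" using a unfolding a_def x_def .
  have "{w\<in>opU k (Rs k s). w < a} = {j \<in> {1..n}. (j < a \<and> a < s a \<and> s a < s j) \<or> (s j < s a \<and> s a \<le> a \<and> a < j)}"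
  proof (unfold opU_Rs[OF k], intro equalityI subsetI)
    fix w assume w: "w \<in> {w \<in> {w \<in> {1..k}. k < s w}. w < a}"
    then have "s w \<noteq> x" using sa s_inj by (metis (mono_tags, lifting) mem_Collect_eq nat_neq_iff)
    then show "w \<in> {j \<in> {1..n}. (j < a \<and> a < s a \<and> s a < s j) \<or> (s j < s a \<and> s a \<le> a \<and> a < j)}"
      using w sa ax k unfolding x_def by auto
  next
    fix j assume j: "j \<in> {j \<in> {1..n}. (j < a \<and> a < s a \<and> s a < s j) \<or> (s j < s a \<and> s a \<le> a \<and> a < j)}"
    then show "j \<in> {w \<in> {w \<in> {1..k}. k < s w}. w < a}" using sa ax unfolding x_def by auto
  qed
  then show ?thesis unfolding nest_i_def a_def x_def by simp
qed

lemma claim_b: assumes k: "k < n" and b: "s (Suc k) \<le> Suc k"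
  shows "card {w\<in>opV k (Rs k s). w < s (Suc k)} = nest_i n s (Suc k)"
proof -
  define x where "x = Suc k"
  define b where "b = s x"
  have xn: "x \<in> {1..n}" using k unfolding x_def by auto
  have ib: "inv s b = x" unfolding b_def using s_inv by auto
  have bx: "b \<le> x" using b unfolding b_def x_def .
  have "{w\<in>opV k (Rs k s). w < b} = s ` {j \<in> {1..n}. (j < x \<and> x < s x \<and> s x < s j) \<or> (s j < s x \<and> s x \<le> x \<and> x < j)}"
  proof (unfold opV_Rs[OF k], intro equalityI subsetI)
    fix w assume w: "w \<in> {w \<in> {w \<in> {1..k}. k < inv s w}. w < b}"
    then have wn: "w \<in> {1..n}" using k by auto
    have "inv s w \<noteq> x"
    proof
      assume "inv s w = x"
      then have "w = b" using s_inv(1)[of w] unfolding b_def by simp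
      then show False using w by simp
    qed
    moreover have "k < inv s w" "w < b" using w by auto
    ultimately have "x < inv s w" "s (inv s w) < s x" using s_inv(1)[of w] unfolding x_def b_def by auto
    then have "inv s w \<in> {j \<in> {1..n}. (j < x \<and> x < s x \<and> s x < s j) \<or> (s j < s x \<and> s x \<le> x \<and> x < j)}"
      using si_in[OF wn] bx unfolding b_def by simp
    then show "w \<in> s ` {j \<in> {1..n}. (j < x \<and> x < s x \<and> s x < s j) \<or> (s j < s x \<and> s x \<le> x \<and> x < j)}"
      by (rule image_eqI[rotated]) (simp add: s_inv)
  next
    fix w assume "w \<in> s ` {j \<in> {1..n}. (j < x \<and> x < s x \<and> s x < s j) \<or> (s j < s x \<and> s x \<le> x \<and> x < j)}"
    then obtain j where j: "w = s j" "j \<in> {1..n}" "(j < x \<and> x < s x \<and> s x < s j) \<or> (s j < s x \<and> s x \<le> x \<and> x < j)" by blast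
    then have c: "s j < b" "x < j" using bx unfolding b_def by auto
    have "s j \<in> {1..n}" using s_in[OF j(2)] .
    moreover have "inv s (s j) = j" using s_inv(2) .
    ultimately show "w \<in> {w \<in> {w \<in> {1..k}. k < inv s w}. w < b}" using j(1) c bx unfolding x_def by simp
  qed
  moreover have "inj_on s {j \<in> {1..n}. (j < x \<and> x < s x \<and> s x < s j) \<or> (s j < s x \<and> s x \<le> x \<and> x < j)}"
    using permutes_inj[OF sp] by (rule inj_on_subset) simp
  ultimately show ?thesis unfolding nest_i_def b_def x_def by (simp add: card_image)
qed

lemma claim_c: assumes k: "k < n" and b: "s (Suc k) < Suc k"
  shows "card {w\<in>opV k (Rs k s). s (Suc k) < w} + (if Suc k < inv s (Suc k) then 1 else 0) = cros_i n s (Suc k)"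
proof -
  define x where "x = Suc k"
  define b where "b = s x"
  have xn: "x \<in> {1..n}" using k unfolding x_def by auto
  have ib: "inv s b = x" unfolding b_def using s_inv by auto
  have bx: "b < x" using b unfolding b_def x_def .
  define J where "J = {j \<in> {1..n}. (j < x \<and> x < s j \<and> s j < s x) \<or> (s x < s j \<and> s j \<le> x \<and> x < j)}"
  define W where "W = {w\<in>opV k (Rs k s). b < w}"
  have fW: "finite W" unfolding W_def opV_Rs[OF k] by simp
  have xW: "x \<notin> W" unfolding W_def opV_Rs[OF k] x_def by auto
  have "s ` J = W \<union> (if x < inv s x then {x} else {})"
  proof (intro equalityI subsetI)
    fix w assume "w \<in> s ` J"
    then obtain j where j: "w = s j" "j \<in> {1..n}" "(j < x \<and> x < s j \<and> s j < s x) \<or> (s x < s j \<and> s j \<le> x \<and> x < j)"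
      unfolding J_def by blast
    then have c: "b < s j" "s j \<le> x" "x < j" using bx unfolding b_def by auto
    show "w \<in> W \<union> (if x < inv s x then {x} else {})"
    proof (cases "s j = x")
      case True
      then have "inv s x = j" using s_inv by metis
      then show ?thesis using True j c by auto
    next
      case False
      then show ?thesis using j c s_in[OF j(2)] s_inv unfolding W_def opV_Rs[OF k] x_def by auto
    qed
  next
    fix w assume w: "w \<in> W \<union> (if x < inv s x then {x} else {})"
    show "w \<in> s ` J"
    proof (cases "w \<in> W")
      case True
      then have wn: "w \<in> {1..n}" unfolding W_def opV_Rs[OF k] using k by auto
      have ne: "inv s w \<noteq> x"
      proof
        assume "inv s w = x"
        then have "w = b" using s_inv(1)[of w] unfolding b_def by simp
        then show False using True unfolding W_def by simp
      qed
      have "inv s w \<in> J" using True si_in[OF wn] s_inv ne unfolding W_def opV_Rs[OF k] J_def x_def b_def by auto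
      then show ?thesis by (rule image_eqI[rotated]) (simp add: s_inv)
    next
      case False
      then have "w = x" "x < inv s x" using w by (auto split: if_splits)
      then have "inv s x \<in> J" using si_in[OF xn] s_inv bx unfolding J_def b_def by auto
      then have "s (inv s x) \<in> s ` J" by (rule imageI)
      then show ?thesis using \<open>w = x\<close> s_inv(1)[of x] by simp
    qed
  qed
  moreover have "inj_on s J" using permutes_inj[OF sp] by (rule inj_on_subset) simp
  ultimately have "card J = card (W \<union> (if x < inv s x then {x} else {}))" by (metis card_image)
  also have "\<dots> = card W + (if x < inv s x then 1 else 0)" using fW xW by auto
  finally show ?thesis unfolding cros_i_def J_def W_def b_def x_def by simp
qed


definition tw :: "real \<Rightarrow> real \<Rightarrow> real \<Rightarrow> real \<Rightarrow> real \<Rightarrow> nat \<Rightarrow> real" where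
  "tw av ap aa ad af x = (if s x = x then af else if inv s x < x \<and> s x < x then ap
     else if inv s x < x then aa else if s x < x then ad else av)"
definition cU :: "nat \<Rightarrow> nat" where
  "cU x = card {w\<in>{1..x-1}. x \<le> s w \<and> inv s x < w}"
definition NL :: "nat \<Rightarrow> nat" where
  "NL x = (if inv s x < x then nest_i n s (inv s x) else 0) + (if s x \<le> x then nest_i n s x else 0)"
definition CL :: "nat \<Rightarrow> nat" where
  "CL x = (if inv s x < x then cU x else 0) + (if s x < x then cros_i n s x else 0)"

lemma loc_fact: assumes k: "k < n"
  shows "loc p q av ap aa ad af k (Rs (Suc k) s) = tw av ap aa ad af (Suc k) * p ^ NL (Suc k) * q ^ CL (Suc k)"
proof -
  define x where "x = Suc k"
  define a where "a = inv s x"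
  define b where "b = s x"
  define U where "U = opU k (Rs k s)"
  define V where "V = opV k (Rs k s)"
  have xn: "x \<in> {1..n}" using k unfolding x_def by auto
  have ax: "a = x \<longleftrightarrow> b = x" unfolding a_def b_def using s_inv by metis
  have rU: "rk p q U a = p ^ nest_i n s a * q ^ cU x" if "a < x"
  proof -
    have "card {w\<in>U. w<a} = nest_i n s a" using claim_a[OF k] that unfolding U_def a_def x_def by simp
    moreover have "{w\<in>U. a<w} = {w\<in>{1..x-1}. x \<le> s w \<and> inv s x < w}"
      unfolding U_def opU_Rs[OF k] a_def x_def by auto
    ultimately show ?thesis unfolding rk_def cU_def by simp
  qed
  have rV: "rk p q V b = p ^ nest_i n s x * q ^ card {w\<in>V. b<w}" if "b < x"
  proof -
    have "card {w\<in>V. w<b} = nest_i n s x" using claim_b[OF k] that unfolding V_def b_def x_def by simp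
    then show ?thesis unfolding rk_def by simp
  qed
  have cV: "card {w\<in>V. b<w} + (if x < a then 1 else 0) = cros_i n s x" if "b < x"
    using claim_c[OF k] that unfolding V_def a_def b_def x_def by simp
  have L: "loc p q av ap aa ad af k (Rs (Suc k) s) =
   (if b = x then af * p ^ card V
    else if a < x \<and> b < x then ap * rk p q U a * rk p q V b
    else if a < x then aa * rk p q U a
    else if b < x then ad * q * rk p q V b
    else av)" unfolding loc_Rs[OF k] a_def b_def x_def U_def V_def by simp
  have G: "tw av ap aa ad af (Suc k) * p ^ NL (Suc k) * q ^ CL (Suc k) =
     (if b = x then af else if a < x \<and> b < x then ap else if a < x then aa else if b < x then ad else av)
     * p ^ ((if a < x then nest_i n s a else 0) + (if b \<le> x then nest_i n s x else 0))
     * q ^ ((if a < x then cU x else 0) + (if b < x then cros_i n s x else 0))"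
    unfolding tw_def NL_def CL_def a_def b_def x_def by simp
  show ?thesis
  proof (cases "b = x")
    case True
    have "V = {w\<in>V. w < b}" using True unfolding V_def opV_Rs[OF k] x_def by auto
    then have "card V = nest_i n s x" using claim_b[OF k] True unfolding V_def b_def x_def by simp
    then show ?thesis using True ax
      by (simp add: L G)
  next
    case bx: False
    then have ax': "a \<noteq> x" using ax by simp
    show ?thesis
    proof (cases "a < x")
      case aL: True
      show ?thesis
      proof (cases "b < x")
        case True
        have "card {w\<in>V. b<w} = cros_i n s x" using cV[OF True] aL by simp
        then show ?thesis using aL True bx
          by (simp add: L G rU rV power_add)
      next
        case False
        then show ?thesis using aL bx
          by (simp add: L G rU)
      qed
    next
      case aL: False
      then have xa: "x < a" using ax' by simp
      show ?thesis
      proof (cases "b < x")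
        case True
        have "Suc (card {w\<in>V. b<w}) = cros_i n s x" using cV[OF True] xa by simp
        then show ?thesis using aL True bx
          by (simp add: L G rV power_add) (metis power_Suc mult.assoc mult.commute mult.left_commute)
      next
        case False
        then show ?thesis using aL bx
          by (simp add: L G)
      qed
    qed
  qed
qed


lemma NL_sum: "(\<Sum>x\<in>{1..n}. NL x) = nest n s"
proof -
  have perm: "inv s permutes {1..n}" using permutes_inv[OF sp] .
  define g where "g i = (if i < s i then nest_i n s i else 0)" for i
  have "(\<Sum>x\<in>{1..n}. (if inv s x < x then nest_i n s (inv s x) else 0)) = (\<Sum>x\<in>{1..n}. (g \<circ> inv s) x)"
    unfolding g_def o_def by (simp add: s_inv)
  also have "\<dots> = sum g {1..n}" using sum.permute[OF perm, of g] by simp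
  finally have A: "(\<Sum>x\<in>{1..n}. (if inv s x < x then nest_i n s (inv s x) else 0)) = sum g {1..n}" .
  have "(\<Sum>x\<in>{1..n}. NL x) = (\<Sum>x\<in>{1..n}. (if inv s x < x then nest_i n s (inv s x) else 0)) + (\<Sum>x\<in>{1..n}. (if s x \<le> x then nest_i n s x else 0))"
    unfolding NL_def by (simp add: sum.distrib)
  also have "\<dots> = (\<Sum>x\<in>{1..n}. g x + (if s x \<le> x then nest_i n s x else 0))" unfolding A by (simp add: sum.distrib)
  also have "\<dots> = (\<Sum>x\<in>{1..n}. nest_i n s x)" unfolding g_def by (rule sum.cong) auto
  finally show ?thesis unfolding nest_def .
qed

lemma dc: "finite A \<Longrightarrow> (\<Sum>i\<in>A. card {j\<in>A. Q j i}) = (\<Sum>j\<in>A. card {i\<in>A. Q j i})"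
proof -
  assume fA: "finite A"
  have "(\<Sum>i\<in>A. card {j\<in>A. Q j i}) = (\<Sum>i\<in>A. \<Sum>j\<in>A. if Q j i then 1 else 0)"
    using fA by (simp add: sum.inter_filter[symmetric])
  also have "\<dots> = (\<Sum>j\<in>A. \<Sum>i\<in>A. if Q j i then 1 else 0)" by (rule sum.swap)
  also have "\<dots> = (\<Sum>j\<in>A. card {i\<in>A. Q j i})"
    using fA by (simp add: sum.inter_filter[symmetric])
  finally show ?thesis .
qed

lemma CL_sum: "(\<Sum>x\<in>{1..n}. CL x) = cros n s"
proof -
  define Q where "Q j i = (j < i \<and> i < s j \<and> s j < s i)" for j i
  define g where "g x = (if inv s x < x then cU x else 0)" for x
  have "sum g {1..n} = sum (g \<circ> s) {1..n}" by (rule sum.permute[OF sp])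
  also have "\<dots> = (\<Sum>j\<in>{1..n}. card {i\<in>{1..n}. Q j i})"
  proof (rule sum.cong)
    fix j assume j: "j \<in> {1..n}"
    show "(g \<circ> s) j = card {i\<in>{1..n}. Q j i}"
    proof (cases "j < s j")
      case True
      have "{w\<in>{1..s j - 1}. s j \<le> s w \<and> j < w} = {i\<in>{1..n}. Q j i}"
      proof (intro equalityI subsetI)
        fix w assume w: "w \<in> {w\<in>{1..s j - 1}. s j \<le> s w \<and> j < w}"
        then have "s w \<noteq> s j" using s_inj by auto
        then show "w \<in> {i\<in>{1..n}. Q j i}" using w s_in[OF j] unfolding Q_def by auto
      next
        fix i assume "i \<in> {i\<in>{1..n}. Q j i}"
        then show "i \<in> {w\<in>{1..s j - 1}. s j \<le> s w \<and> j < w}" unfolding Q_def by auto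
      qed
      then show ?thesis using True unfolding g_def cU_def o_def by (simp add: s_inv)
    next
      case False
      then have "{i\<in>{1..n}. Q j i} = {}" unfolding Q_def by auto
      then show ?thesis using False unfolding g_def o_def by (simp add: s_inv)
    qed
  qed simp
  also have "\<dots> = (\<Sum>i\<in>{1..n}. card {j\<in>{1..n}. Q j i})" by (rule dc[symmetric]) simp
  also have "\<dots> = (\<Sum>i\<in>{1..n}. if i < s i then cros_i n s i else 0)"
  proof (rule sum.cong)
    fix i assume i: "i \<in> {1..n}"
    show "card {j\<in>{1..n}. Q j i} = (if i < s i then cros_i n s i else 0)"
    proof (cases "i < s i")
      case True
      have "{j\<in>{1..n}. Q j i} = {j \<in> {1..n}. (j < i \<and> i < s j \<and> s j < s i) \<or> (s i < s j \<and> s j \<le> i \<and> i < j)}"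
        using True unfolding Q_def by auto
      then show ?thesis using True unfolding cros_i_def by simp
    next
      case False
      then have "{j\<in>{1..n}. Q j i} = {}" unfolding Q_def by auto
      then show ?thesis using False by simp
    qed
  qed simp
  finally have A: "sum g {1..n} = (\<Sum>i\<in>{1..n}. if i < s i then cros_i n s i else 0)" .
  have fx: "cros_i n s x = 0" if "s x = x" for x
  proof -
    have "{j \<in> {1..n}. (j < x \<and> x < s j \<and> s j < s x) \<or> (s x < s j \<and> s j \<le> x \<and> x < j)} = {}" using that by auto
    then show ?thesis unfolding cros_i_def by simp
  qed
  have "(\<Sum>x\<in>{1..n}. CL x) = sum g {1..n} + (\<Sum>x\<in>{1..n}. (if s x < x then cros_i n s x else 0))"
    unfolding CL_def g_def by (simp add: sum.distrib)
  also have "\<dots> = (\<Sum>x\<in>{1..n}. (if x < s x then cros_i n s x else 0) + (if s x < x then cros_i n s x else 0))"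
    unfolding A by (simp add: sum.distrib)
  also have "\<dots> = (\<Sum>x\<in>{1..n}. cros_i n s x)"
    by (rule sum.cong) (use fx in \<open>auto simp: nat_neq_iff\<close>)
  finally show ?thesis unfolding cros_def .
qed

lemma Wt_sigma: "Wt p q av ap aa ad af n (Rs n s) = p ^ nest n s * q ^ cros n s * (\<Prod>x\<in>{1..n}. tw av ap aa ad af x)"
proof -
  have "Wt p q av ap aa ad af n (Rs n s) = (\<Prod>k<n. tw av ap aa ad af (Suc k) * p ^ NL (Suc k) * q ^ CL (Suc k))"
    unfolding Wt_Rs by (rule prod.cong) (auto simp: loc_fact)
  also have "\<dots> = (\<Prod>x\<in>{1..n}. tw av ap aa ad af x * p ^ NL x * q ^ CL x)"
  proof -
    have "{1..n} = Suc ` {..<n}" by (simp add: image_Suc_lessThan)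
    then show ?thesis by (simp add: prod.reindex)
  qed
  also have "\<dots> = (\<Prod>x\<in>{1..n}. tw av ap aa ad af x) * p ^ (\<Sum>x\<in>{1..n}. NL x) * q ^ (\<Sum>x\<in>{1..n}. CL x)"
    by (simp add: prod.distrib power_sum)
  finally show ?thesis unfolding NL_sum CL_sum by (simp only: mult_ac)
qed


lemma prod_if_pow: "finite S \<Longrightarrow> (\<Prod>x\<in>S. if P x then (c::real) else 1) = c ^ card {x\<in>S. P x}"
  by (simp add: prod.inter_filter[symmetric])

lemma tw_prod: "(\<Prod>x\<in>{1..n}. tw (c0*cE) (c0*cC) (c0*cE) c0 (c0*cR) x)
   = c0 ^ n * cC ^ cpk n s * cE ^ exc n s * cR ^ fixp n s"
proof -
  have "(\<Prod>x\<in>{1..n}. tw (c0*cE) (c0*cC) (c0*cE) c0 (c0*cR) x)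
     = (\<Prod>x\<in>{1..n}. c0 * ((if inv s x < x \<and> x > s x then cC else 1) * ((if s x > x then cE else 1) * (if s x = x then cR else 1))))"
  proof (rule prod.cong)
    fix x
    have "inv s x = x \<longleftrightarrow> s x = x" using s_inv by metis
    then show "tw (c0*cE) (c0*cC) (c0*cE) c0 (c0*cR) x = c0 * ((if inv s x < x \<and> x > s x then cC else 1) * ((if s x > x then cE else 1) * (if s x = x then cR else 1)))"
      unfolding tw_def by (auto simp: nat_neq_iff)
  qed simp
  also have "\<dots> = c0 ^ n * (cC ^ cpk n s * (cE ^ exc n s * cR ^ fixp n s))"
    by (simp add: prod.distrib prod_if_pow cpk_def exc_def fixp_def)
  finally show ?thesis by (simp add: mult.assoc)
qed

end

lemma part1:
  fixes n :: nat and p q t r x :: real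
  assumes h1: "1 + x \<noteq> 0" and h2: "x + t \<noteq> 0" and h3: "1 + x * t \<noteq> 0"
  shows "Pgen [nest n, cros n, exc n, fixp n] (Sym n) [p, q, t * q, r]
            = ((1 + x * t) / (1 + x)) ^ n *
              Pgen [nest n, cros n, cpk n, exc n, fixp n] (Sym n)
                [p, q, (1 + x)^2 * t / ((x + t) * (1 + x * t)), q * (x + t) / (1 + x * t),
                 (1 + x) * r / (1 + x * t)]"
proof -
  define A where "A = (1 + x * t) / (1 + x)"
  define C where "C = (1 + x)^2 * t / ((x + t) * (1 + x * t))"
  define E where "E = q * (x + t) / (1 + x * t)"
  define RR where "RR = (1 + x) * r / (1 + x * t)"
  define mu where "mu = t * (1 + x) / (x + t)"
  define g0 where "g0 h = (if h = 0 then 1 else (0::real))" for h :: nat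
  define Z where "Z = {R \<in> PI n. card (opU n R) = 0}"
  have sumZ: "\<And>F. sum F Z = (\<Sum>R\<in>PI n. g0 (card (opU n R)) * F R)"
    unfolding Z_def g0_def by (simp add: sum.inter_filter finite_PI) (rule sum.cong, simp_all)
  have L: "Pgen [nest n, cros n, exc n, fixp n] (Sym n) [p, q, t * q, r]
     = (\<Sum>s\<in>Sym n. Wt p q (1*(t*q)) (1*1) (1*(t*q)) 1 (1*r) n (Rs n s))"
  proof (unfold Pgen_def, rule sum.cong)
    fix s assume "s \<in> Sym n"
    then have sp: "s permutes {1..n}" unfolding Sym_def by simp
    show "prod_list (map2 (\<lambda>st t. t ^ st s) [nest n, cros n, exc n, fixp n] [p, q, t * q, r]) = Wt p q (1*(t*q)) (1*1) (1*(t*q)) 1 (1*r) n (Rs n s)"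
      unfolding Wt_sigma[OF sp] tw_prod[OF sp] by simp
  qed simp
  have R: "Pgen [nest n, cros n, cpk n, exc n, fixp n] (Sym n) [p, q, C, E, RR] * A ^ n
     = (\<Sum>s\<in>Sym n. Wt p q (A*E) (A*C) (A*E) A (A*RR) n (Rs n s))"
  proof (unfold Pgen_def sum_distrib_right, rule sum.cong)
    fix s assume "s \<in> Sym n"
    then have sp: "s permutes {1..n}" unfolding Sym_def by simp
    show "prod_list (map2 (\<lambda>st t. t ^ st s) [nest n, cros n, cpk n, exc n, fixp n] [p, q, C, E, RR]) * A ^ n = Wt p q (A*E) (A*C) (A*E) A (A*RR) n (Rs n s)"
      unfolding Wt_sigma[OF sp] tw_prod[OF sp] by (simp add: mult_ac)
  qed simp
  have bij: "bij_betw (Rs n) (Sym n) Z" unfolding Z_def by (rule Rs_bij)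
  have L2: "(\<Sum>s\<in>Sym n. Wt p q (1*(t*q)) (1*1) (1*(t*q)) 1 (1*r) n (Rs n s)) = sum (Wt p q (1*(t*q)) (1*1) (1*(t*q)) 1 (1*r) n) Z"
    using sum.reindex_bij_betw[OF bij] by simp
  have R2: "(\<Sum>s\<in>Sym n. Wt p q (A*E) (A*C) (A*E) A (A*RR) n (Rs n s)) = sum (Wt p q (A*E) (A*C) (A*E) A (A*RR) n) Z"
    using sum.reindex_bij_betw[OF bij] by simp
  have c1: "1*(t*q) = mu * (A*E)" unfolding mu_def A_def E_def using h1 h2 h3 by (simp add: divide_simps; simp add: algebra_simps)
  have c2: "A*C = mu * (1*1)" unfolding mu_def A_def C_def using h1 h2 h3 by (simp add: divide_simps; simp add: algebra_simps power2_eq_square)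
  have c3: "1*(t*q) + q * 1 = A*E + q * A" unfolding A_def E_def using h1 h2 h3 by (simp add: divide_simps; simp add: algebra_simps)
  have c4: "1*r = A*RR" unfolding A_def RR_def using h1 h2 h3 by (simp add: divide_simps)
  have inv: "(\<Sum>R\<in>PI n. g0 (card (opU n R)) * Wt p q (1*(t*q)) (1*1) (1*(t*q)) 1 (1*r) n R)
          = (\<Sum>R\<in>PI n. (g0 (card (opU n R)) * mu ^ card (opU n R)) * Wt p q (A*E) (A*C) (A*E) A (A*RR) n R)"
    using invariant[OF c1 c2 c3 c4] by blast
  have g0mu: "\<And>h. g0 h * mu ^ h = g0 h" unfolding g0_def by simp
  have "Pgen [nest n, cros n, exc n, fixp n] (Sym n) [p, q, t * q, r]
     = Pgen [nest n, cros n, cpk n, exc n, fixp n] (Sym n) [p, q, C, E, RR] * A ^ n"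
    unfolding L R L2 R2 sumZ inv g0mu ..
  then show ?thesis unfolding A_def C_def E_def RR_def by (simp add: mult.commute)
qed


lemma alg1:
  fixes x t s u v :: real
  assumes s2: "s^2 = (1+t)^2 - 4*x*t"
    and hu: "u * (2*(1-x)*t) = 1 + t^2 - 2*x*t - (1-t)*s"
    and hv: "v * (2*x*t) = (1+t)^2 - 2*x*t - (1+t)*s"
  shows "(4*x*(1-x)*t^2) * ((u+v) - t*(1+u*v)) = 0"
  using assms by algebra

lemma alg2:
  fixes x t s u v :: real
  assumes s2: "s^2 = (1+t)^2 - 4*x*t"
    and hu: "u * (2*(1-x)*t) = 1 + t^2 - 2*x*t - (1-t)*s"
    and hv: "v * (2*x*t) = (1+t)^2 - 2*x*t - (1+t)*s"
  shows "(4*x*(1-x)*t^2)^2 * (x*t) * ((1+u)^2*v - x*(u+v)*(1+u*v)) = 0"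
  using assms by algebra

lemma part2:
  fixes n :: nat and p q t r x u v :: real
  assumes x0: "x \<noteq> 0" and x1: "x \<noteq> 1" and t0: "t \<noteq> 0" and D: "(1 + t)^2 - 4 * x * t \<ge> 0"
    and ud: "u = (1 + t^2 - 2 * x * t - (1 - t) * sqrt ((1 + t)^2 - 4 * x * t)) / (2 * (1 - x) * t)"
    and vd: "v = ((1 + t)^2 - 2 * x * t - (1 + t) * sqrt ((1 + t)^2 - 4 * x * t)) / (2 * x * t)"
    and u1: "1 + u \<noteq> 0" and uv1: "1 + u * v \<noteq> 0"
  shows "Pgen [nest n, cros n, cpk n, exc n, fixp n] (Sym n) [p, q, x, q * t, r]
            = ((1 + u) / (1 + u * v)) ^ n *
              Pgen [nest n, cros n, exc n, fixp n] (Sym n) [p, q, q * v, (1 + u * v) * r / (1 + u)]"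
proof -
  define s where "s = sqrt ((1 + t)^2 - 4 * x * t)"
  have s2: "s^2 = (1+t)^2 - 4*x*t" unfolding s_def using D by simp
  have d1: "2*(1-x)*t \<noteq> 0" using x1 t0 by simp
  have d2: "2*x*t \<noteq> 0" using x0 t0 by simp
  have hu: "u * (2*(1-x)*t) = 1 + t^2 - 2*x*t - (1-t)*s" unfolding ud s_def using d1 by simp
  have hv: "v * (2*x*t) = (1+t)^2 - 2*x*t - (1+t)*s" unfolding vd s_def using d2 by simp
  have m: "4*x*(1-x)*t^2 \<noteq> 0" using x0 x1 t0 by simp
  have e1: "u + v = t*(1+u*v)" using alg1[OF s2 hu hv] m by simp
  have m2: "(4*x*(1-x)*t^2)^2 * (x*t) \<noteq> 0" using m x0 t0 by simp
  have e2: "(1+u)^2*v = x*(u+v)*(1+u*v)" using alg2[OF s2 hu hv] m2 by simp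
  have uv0: "u + v \<noteq> 0" using e1 t0 uv1 by simp
  define r' where "r' = (1 + u * v) * r / (1 + u)"
  have P: "Pgen [nest n, cros n, exc n, fixp n] (Sym n) [p, q, v * q, r']
            = ((1 + u * v) / (1 + u)) ^ n *
              Pgen [nest n, cros n, cpk n, exc n, fixp n] (Sym n)
                [p, q, (1 + u)^2 * v / ((u + v) * (1 + u * v)), q * (u + v) / (1 + u * v),
                 (1 + u) * r' / (1 + u * v)]"
    by (rule part1) (use u1 uv0 uv1 in auto)
  have a1: "(1 + u)^2 * v / ((u + v) * (1 + u * v)) = x" using e2 uv0 uv1 by (simp add: divide_simps)
  have a2: "q * (u + v) / (1 + u * v) = q * t" using e1 uv1 by (simp add: divide_simps)
  have a3: "(1 + u) * r' / (1 + u * v) = r" unfolding r'_def using u1 uv1 by (simp add: divide_simps)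
  have P': "Pgen [nest n, cros n, exc n, fixp n] (Sym n) [p, q, q * v, r']
            = ((1 + u * v) / (1 + u)) ^ n * Pgen [nest n, cros n, cpk n, exc n, fixp n] (Sym n) [p, q, x, q * t, r]"
    using P unfolding a1 a2 a3 by (simp add: mult.commute)
  have k: "((1 + u) / (1 + u * v)) ^ n * ((1 + u * v) / (1 + u)) ^ n = 1"
    using u1 uv1 by (simp add: power_mult_distrib[symmetric])
  show ?thesis unfolding P' r'_def[symmetric] using k by (simp add: mult.assoc[symmetric])
qed

theorem theorem3p10:
  fixes n :: nat
  assumes "n \<ge> 1"
  shows "(\<forall>p q t r x :: real. 1 + x \<noteq> 0 \<longrightarrow> x + t \<noteq> 0 \<longrightarrow> 1 + x * t \<noteq> 0 \<longrightarrow>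
            Pgen [nest n, cros n, exc n, fixp n] (Sym n) [p, q, t * q, r]
            = ((1 + x * t) / (1 + x)) ^ n *
              Pgen [nest n, cros n, cpk n, exc n, fixp n] (Sym n)
                [p, q, (1 + x)^2 * t / ((x + t) * (1 + x * t)), q * (x + t) / (1 + x * t),
                 (1 + x) * r / (1 + x * t)])
       \<and> (\<forall>p q t r x u v :: real. x \<noteq> 0 \<longrightarrow> x \<noteq> 1 \<longrightarrow> t \<noteq> 0 \<longrightarrow> (1 + t)^2 - 4 * x * t \<ge> 0 \<longrightarrow>
            u = (1 + t^2 - 2 * x * t - (1 - t) * sqrt ((1 + t)^2 - 4 * x * t)) / (2 * (1 - x) * t) \<longrightarrow>
            v = ((1 + t)^2 - 2 * x * t - (1 + t) * sqrt ((1 + t)^2 - 4 * x * t)) / (2 * x * t) \<longrightarrow>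
            1 + u \<noteq> 0 \<longrightarrow> 1 + u * v \<noteq> 0 \<longrightarrow>
            Pgen [nest n, cros n, cpk n, exc n, fixp n] (Sym n) [p, q, x, q * t, r]
            = ((1 + u) / (1 + u * v)) ^ n *
              Pgen [nest n, cros n, exc n, fixp n] (Sym n) [p, q, q * v, (1 + u * v) * r / (1 + u)])"
  using part1 part2 by blast

end
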